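(* There exists an invertible $18\times18$ binary matrix such that the corresponding linear kernel has partial distance sequence $(1,2,2,2,2,2,4,4,4,4,6,6,8,8,8,8,8,16)$. Consequently $E_{18}\ge\frac1{18}\sum_{i=0}^{17}\log_{18}D_{min}^{(i)}\approx0.49521$.
   Context: A kernel of dimension $\ell$ is a bijection $g:\{0,1\}^\ell\to\{0,1\}^\ell$; a linear kernel is $g({\bf u})={\bf u}G$ over $\mathbb{F}_2$ for an invertible $\ell\times\ell$ binary matrix $G$. ${\bf a}\bullet{\bf b}$ denotes concatenation, $d_H$ Hamming distance. Partial distances: $D_{min}^{(i)}=\min\{d_H(g({\bf w}\bullet 0\bullet{\bf u}),g({\bf w}\bullet 1\bullet {\bf v})) : {\bf w}\in\{0,1\}^i,\ {\bf u},{\bf v}\in\{0,1\}^{\ell-i-1}\}$, $i=0,\dots,\ell-1$; exponent $E(g)=\frac1\ell\sum_{i}\log_\ell D_{min}^{(i)}$; $E_\ell=\max_g E(g)$ over all kernels of dimension $\ell$. *)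

theory Defs
  imports "HOL-Library.Z2" "Jordan_Normal_Form.Matrix"
begin

definition hamming :: "bit vec \<Rightarrow> bit vec \<Rightarrow> nat" where
  "hamming a b = card {i. i < dim_vec a \<and> a $ i \<noteq> b $ i}"

definition is_kernel :: "nat \<Rightarrow> (bit vec \<Rightarrow> bit vec) \<Rightarrow> bool" where
  "is_kernel l g \<longleftrightarrow> bij_betw g (carrier_vec l) (carrier_vec l)"

text \<open>Linear kernel u |-> u G (row vector times matrix), computed as G^T times u.\<close>
definition lin_kernel :: "bit mat \<Rightarrow> bit vec \<Rightarrow> bit vec" where
  "lin_kernel G u = transpose_mat G *\<^sub>v u"

definition partial_dist :: "nat \<Rightarrow> (bit vec \<Rightarrow> bit vec) \<Rightarrow> nat \<Rightarrow> nat" where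
  "partial_dist l g i = Min {hamming (g (vec_of_list (w @ 0 # u))) (g (vec_of_list (w @ 1 # v))) | w u v.
      length w = i \<and> length u = l - i - 1 \<and> length v = l - i - 1}"

definition kernel_exponent :: "nat \<Rightarrow> (bit vec \<Rightarrow> bit vec) \<Rightarrow> real" where
  "kernel_exponent l g = (1 / real l) * (\<Sum>i<l. log (real l) (real (partial_dist l g i)))"

definition opt_exponent :: "nat \<Rightarrow> real" where
  "opt_exponent l = Max {kernel_exponent l g | g. is_kernel l g}"

end

theory Submission
  imports Defs
begin

definition wtb :: "bool list \<Rightarrow> nat" where "wtb xs = length (filter id xs)"
definition xorl :: "bool list \<Rightarrow> bool list \<Rightarrow> bool list" where "xorl a b = map2 (\<noteq>) a b"
fun cmin :: "bool list \<Rightarrow> bool list list \<Rightarrow> nat" where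
  "cmin a [] = wtb a"
| "cmin a (r#rs) = min (cmin a rs) (cmin (xorl a r) rs)"
fun lincomb :: "bool list \<Rightarrow> bool list list \<Rightarrow> bool list \<Rightarrow> bool list" where
  "lincomb a (r#rs) (c#cs) = lincomb (if c then xorl a r else a) rs cs"
| "lincomb a _ _ = a"

lemma len_lincomb: "(\<forall>r\<in>set rs. length r = length a) \<Longrightarrow> length (lincomb a rs cs) = length a"
  by (induction a rs cs rule: lincomb.induct) (auto simp: xorl_def)

lemma of_bool_neq_bit: "(of_bool (x \<noteq> y) :: bit) = of_bool x + of_bool y"
  by (cases x; cases y) auto

lemma LC: "length cs = length rs \<Longrightarrow> \<forall>r\<in>set rs. length r = length a \<Longrightarrow> k < length a \<Longrightarrow>
  (of_bool (lincomb a rs cs ! k) :: bit) = of_bool (a!k) + (\<Sum>t<length rs. of_bool (cs!t) * of_bool (rs!t!k))"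
proof (induction rs arbitrary: a cs)
  case Nil
  then show ?case by simp
next
  case (Cons r rs)
  then obtain c cs' where cs: "cs = c # cs'" by (cases cs) auto
  let ?a = "if c then xorl a r else a"
  have la: "length ?a = length a" using Cons.prems by (auto simp: xorl_def)
  have "(of_bool (lincomb a (r#rs) cs ! k) :: bit) = of_bool (?a!k) + (\<Sum>t<length rs. of_bool (cs'!t) * of_bool (rs!t!k))"
    using Cons.IH[of cs' ?a] Cons.prems la cs by simp
  also have "of_bool (?a!k) = (of_bool (a!k) :: bit) + of_bool c * of_bool (r!k)"
    using Cons.prems by (auto simp: xorl_def of_bool_neq_bit)
  finally show ?case using cs
    by (simp only: length_Cons sum.lessThan_Suc_shift nth_Cons_0 nth_Cons_Suc add.assoc)
qed

lemma CM: "length cs = length rs \<Longrightarrow> cmin a rs \<le> wtb (lincomb a rs cs)"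
proof (induction rs arbitrary: a cs)
  case Nil
  then show ?case by simp
next
  case (Cons r rs)
  then obtain c cs' where cs: "cs = c # cs'" by (cases cs) auto
  show ?case using Cons.IH[of cs'] Cons.prems cs
    by (cases c) (auto simp: min_le_iff_disj)
qed

lemma XP: "length a = length r \<Longrightarrow> even (wtb (xorl a r)) \<longleftrightarrow> (even (wtb a) \<longleftrightarrow> even (wtb r))"
  by (induction a r rule: list_induct2) (auto simp: wtb_def xorl_def)

lemma EV: "even (wtb a) \<Longrightarrow> \<forall>r\<in>set rs. even (wtb r) \<and> length r = length a \<Longrightarrow> even (wtb (lincomb a rs cs))"
proof (induction a rs cs rule: lincomb.induct)
  case (1 a r rs c cs)
  have "length (if c then xorl a r else a) = length a" by (auto simp: xorl_def 1(3))
  then show ?case using 1 XP by (auto simp: xorl_def)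
qed auto

lemma SPLIT: "(\<Sum>j<length (replicate i 0 @ 1 # d). (replicate i 0 @ (1::bit) # d)!j * M j)
   = M i + (\<Sum>t<length d. d!t * M (Suc i + t))"
proof (induction i arbitrary: M)
  case 0
  show ?case by (simp only: replicate_0 append_Nil length_Cons sum.lessThan_Suc_shift nth_Cons_0
      nth_Cons_Suc mult_1_left plus_nat.add_0 add_Suc)
next
  case (Suc i)
  have "(\<Sum>j<length (replicate (Suc i) 0 @ 1 # d). (replicate (Suc i) 0 @ (1::bit) # d)!j * M j)
     = (\<Sum>j<length (replicate i 0 @ 1 # d). (replicate i 0 @ (1::bit) # d)!j * M (Suc j))"
    by (simp only: replicate_Suc append_Cons length_Cons sum.lessThan_Suc_shift nth_Cons_0
      nth_Cons_Suc mult_zero_left add_0_left)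
  also have "\<dots> = M (Suc i) + (\<Sum>t<length d. d!t * M (Suc (Suc i + t)))"
    using Suc.IH[of "\<lambda>j. M (Suc j)"] by (simp only: add_Suc_right add_Suc)
  finally show ?case by (simp only: add_Suc_right add_Suc)
qed

definition Rb :: "bool list list" where "Rb = [[True,False,False,False,False,False,False,False,False,False,False,False,False,False,False,False,False,False],
  [True,False,False,False,False,False,False,True,False,False,False,False,False,False,False,False,False,False],
  [True,False,False,False,True,False,False,False,False,False,False,False,False,False,False,False,False,False],
  [True,False,False,True,False,False,False,False,False,False,False,False,False,False,False,False,False,False],
  [True,False,True,False,False,False,False,False,False,False,False,False,False,False,False,False,False,False],
  [True,True,False,False,False,False,False,False,False,False,False,False,False,False,False,False,False,False],
  [False,False,False,True,True,False,True,False,False,False,False,False,False,False,False,False,True,False],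
  [False,True,True,False,False,False,False,False,False,False,False,False,True,True,False,False,False,False],
  [False,False,True,True,False,False,False,False,False,True,False,False,False,False,False,False,False,True],
  [False,False,False,False,False,True,False,True,True,False,False,False,False,False,False,False,True,False],
  [True,True,False,False,False,False,False,True,False,False,False,False,False,True,True,False,True,False],
  [True,False,False,True,True,False,True,False,True,False,False,True,False,False,False,False,False,False],
  [False,False,False,True,True,True,False,False,False,True,True,False,True,True,False,False,True,False],
  [False,False,False,True,False,True,False,True,False,True,True,True,False,False,True,True,False,False],
  [True,True,False,False,False,True,False,False,True,False,True,False,False,True,False,False,True,True],
  [False,False,True,False,True,True,False,False,True,False,True,True,False,True,True,False,False,False],
  [False,False,False,False,True,True,True,False,True,True,False,True,True,False,False,True,False,False],
  [False,False,True,True,True,True,True,True,True,True,True,True,True,True,True,True,True,True]]"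
definition Bb :: "bool list list" where "Bb = [[True,False,False,False,False,False,False,False,False,False,False,False,False,False,False,False,False,False],
  [True,False,False,False,False,True,False,False,False,False,False,False,False,False,False,False,False,False],
  [True,False,False,False,True,False,False,False,False,False,False,False,False,False,False,False,False,False],
  [True,False,False,True,False,False,False,False,False,False,False,False,False,False,False,False,False,False],
  [True,False,True,False,False,False,False,False,False,False,False,False,False,False,False,False,False,False],
  [True,False,False,True,True,True,False,False,True,True,True,True,True,True,False,True,False,True],
  [True,False,False,True,False,True,True,True,False,True,False,True,False,True,False,True,True,False],
  [True,True,False,False,False,False,False,False,False,False,False,False,False,False,False,False,False,False],
  [True,True,True,True,True,False,False,True,True,True,True,False,True,False,False,False,True,True],
  [True,True,True,True,False,True,True,False,False,True,True,False,True,True,False,False,True,False],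
  [True,True,True,True,False,False,True,False,True,True,False,False,True,True,False,False,False,True],
  [True,True,False,True,True,True,True,False,True,False,True,False,True,True,False,True,False,True],
  [True,True,False,True,False,True,False,True,False,True,True,False,False,False,True,False,True,True],
  [True,True,False,True,True,False,False,False,False,True,True,False,False,False,True,False,True,True],
  [True,False,True,True,True,False,False,True,False,False,False,True,False,True,True,True,False,True],
  [True,False,True,False,True,True,True,True,True,True,True,False,False,False,True,True,True,False],
  [True,False,True,False,False,True,False,True,False,True,False,True,False,True,False,True,True,False],
  [True,True,True,False,True,True,True,False,True,True,True,False,True,True,False,False,True,False]]"


lemma rows_ok: "length Rb = 18 \<and> (\<forall>r\<in>set Rb. length r = 18)" by code_simp
lemma brows_ok: "length Bb = 18 \<and> (\<forall>r\<in>set Bb. length r = 18)" by code_simp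
lemma prodGB: "map (\<lambda>r. lincomb (replicate 18 False) Bb r) Rb = map (\<lambda>i. map (\<lambda>j. j = i) [0..<18]) [0..<18]" by code_simp
lemma prodBG: "map (\<lambda>r. lincomb (replicate 18 False) Rb r) Bb = map (\<lambda>i. map (\<lambda>j. j = i) [0..<18]) [0..<18]" by code_simp

lemma cmin6: "cmin (Rb!6) (drop (Suc 6) Rb) = 4" by code_simp
lemma cmin7: "cmin (Rb!7) (drop (Suc 7) Rb) = 4" by code_simp
lemma cmin8: "cmin (Rb!8) (drop (Suc 8) Rb) = 4" by code_simp
lemma cmin9: "cmin (Rb!9) (drop (Suc 9) Rb) = 4" by code_simp
lemma cmin10: "cmin (Rb!10) (drop (Suc 10) Rb) = 6" by code_simp
lemma cmin11: "cmin (Rb!11) (drop (Suc 11) Rb) = 6" by code_simp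
lemma cmin12: "cmin (Rb!12) (drop (Suc 12) Rb) = 8" by code_simp
lemma cmin13: "cmin (Rb!13) (drop (Suc 13) Rb) = 8" by code_simp
lemma cmin14: "cmin (Rb!14) (drop (Suc 14) Rb) = 8" by code_simp
lemma cmin15: "cmin (Rb!15) (drop (Suc 15) Rb) = 8" by code_simp
lemma cmin16: "cmin (Rb!16) (drop (Suc 16) Rb) = 8" by code_simp
lemma cmin17: "cmin (Rb!17) (drop (Suc 17) Rb) = 16" by code_simp
lemma wit0: "wtb (lincomb (Rb!0) (drop (Suc 0) Rb) [False,False,False,False,False,False,False,False,False,False,False,False,False,False,False,False,False]) = 1" by code_simp
lemma wit1: "wtb (lincomb (Rb!1) (drop (Suc 1) Rb) [False,False,False,False,False,False,False,False,False,False,False,False,False,False,False,False]) = 2" by code_simp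
lemma wit2: "wtb (lincomb (Rb!2) (drop (Suc 2) Rb) [False,False,False,False,False,False,False,False,False,False,False,False,False,False,False]) = 2" by code_simp
lemma wit3: "wtb (lincomb (Rb!3) (drop (Suc 3) Rb) [False,False,False,False,False,False,False,False,False,False,False,False,False,False]) = 2" by code_simp
lemma wit4: "wtb (lincomb (Rb!4) (drop (Suc 4) Rb) [False,False,False,False,False,False,False,False,False,False,False,False,False]) = 2" by code_simp
lemma wit5: "wtb (lincomb (Rb!5) (drop (Suc 5) Rb) [False,False,False,False,False,False,False,False,False,False,False,False]) = 2" by code_simp
lemma wit6: "wtb (lincomb (Rb!6) (drop (Suc 6) Rb) [False,False,False,False,False,False,False,False,False,False,False]) = 4" by code_simp
lemma wit7: "wtb (lincomb (Rb!7) (drop (Suc 7) Rb) [False,False,False,False,False,False,False,False,False,False]) = 4" by code_simp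
lemma wit8: "wtb (lincomb (Rb!8) (drop (Suc 8) Rb) [False,False,False,False,False,False,False,False,False]) = 4" by code_simp
lemma wit9: "wtb (lincomb (Rb!9) (drop (Suc 9) Rb) [False,False,False,False,False,False,False,False]) = 4" by code_simp
lemma wit10: "wtb (lincomb (Rb!10) (drop (Suc 10) Rb) [False,False,False,False,False,False,False]) = 6" by code_simp
lemma wit11: "wtb (lincomb (Rb!11) (drop (Suc 11) Rb) [False,False,False,False,False,False]) = 6" by code_simp
lemma wit12: "wtb (lincomb (Rb!12) (drop (Suc 12) Rb) [False,False,False,False,False]) = 8" by code_simp
lemma wit13: "wtb (lincomb (Rb!13) (drop (Suc 13) Rb) [False,False,False,False]) = 8" by code_simp
lemma wit14: "wtb (lincomb (Rb!14) (drop (Suc 14) Rb) [False,False,False]) = 8" by code_simp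
lemma wit15: "wtb (lincomb (Rb!15) (drop (Suc 15) Rb) [False,False]) = 8" by code_simp
lemma wit16: "wtb (lincomb (Rb!16) (drop (Suc 16) Rb) [False]) = 8" by code_simp
lemma wit17: "wtb (lincomb (Rb!17) (drop (Suc 17) Rb) []) = 16" by code_simp

lemma even_rows: "\<forall>r\<in>set (drop 1 Rb). even (wtb r)" by code_simp

definition G :: "bit mat" where "G = mat 18 18 (\<lambda>(j,k). of_bool (Rb!j!k))"
definition Bm :: "bit mat" where "Bm = mat 18 18 (\<lambda>(j,k). of_bool (Bb!j!k))"

lemma prod_gen:
  assumes P: "length P = 18 \<and> (\<forall>r\<in>set P. length r = 18)"
    and Q: "length Q = 18 \<and> (\<forall>r\<in>set Q. length r = 18)"
    and pr: "map (\<lambda>r. lincomb (replicate 18 False) Q r) P = map (\<lambda>i. map (\<lambda>j. j = i) [0..<18]) [0..<18]"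
  shows "mat 18 18 (\<lambda>(j,k). of_bool (P!j!k)) * mat 18 18 (\<lambda>(j,k). of_bool (Q!j!k)) = (1\<^sub>m 18 :: bit mat)"
proof (rule eq_matI)
  fix i jj assume i: "i < dim_row (1\<^sub>m 18 :: bit mat)" and j: "jj < dim_col (1\<^sub>m 18 :: bit mat)"
  then have i: "i < 18" and j: "jj < 18" by auto
  have Pi: "length (P!i) = 18" using P i by auto
  have "(mat 18 18 (\<lambda>(j,k). of_bool (P!j!k)) * mat 18 18 (\<lambda>(j,k). of_bool (Q!j!k))) $$ (i,jj)
      = (\<Sum>t\<in>{0..<18}. (of_bool (P!i!t) :: bit) * of_bool (Q!t!jj))"
    using i j by (simp add: scalar_prod_def del: mult_bit_eq_and add_bit_eq_xor)
  also have "\<dots> = (\<Sum>t<length Q. of_bool (P!i!t) * of_bool (Q!t!jj))"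
    using Q by (simp add: atLeast0LessThan del: mult_bit_eq_and add_bit_eq_xor)
  also have "\<dots> = of_bool (lincomb (replicate 18 False) Q (P!i) ! jj)"
    using LC[of "P!i" Q "replicate 18 False" jj] P Q Pi j by simp
  also have "lincomb (replicate 18 False) Q (P!i) = map (\<lambda>j. j = i) [0..<18]"
    using arg_cong[OF pr, of "\<lambda>l. l!i"] i P by simp
  also have "(of_bool (map (\<lambda>j. j = i) [0..<18] ! jj) :: bit) = 1\<^sub>m 18 $$ (i,jj)"
    using i j by auto
  finally show "(mat 18 18 (\<lambda>(j,k). of_bool (P!j!k)) * mat 18 18 (\<lambda>(j,k). of_bool (Q!j!k))) $$ (i,jj) = (1\<^sub>m 18 :: bit mat) $$ (i,jj)" .
qed auto

lemma GB: "G * Bm = 1\<^sub>m 18"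
  unfolding G_def Bm_def by (rule prod_gen[OF rows_ok brows_ok prodGB])
lemma BG: "Bm * G = 1\<^sub>m 18"
  unfolding G_def Bm_def by (rule prod_gen[OF brows_ok rows_ok prodBG])

lemma G_carrier: "G \<in> carrier_mat 18 18" and Bm_carrier: "Bm \<in> carrier_mat 18 18"
  by (auto simp: G_def Bm_def)

lemma INV_gen: assumes "A \<in> carrier_mat 18 18" "B \<in> carrier_mat 18 18" "A * B = 1\<^sub>m 18"
  "v \<in> carrier_vec 18"
  shows "lin_kernel B (lin_kernel A v) = v"
proof -
  have "lin_kernel B (lin_kernel A v) = (transpose_mat B * transpose_mat A) *\<^sub>v v"
    unfolding lin_kernel_def using assms by (subst assoc_mult_mat_vec) auto
  also have "transpose_mat B * transpose_mat A = transpose_mat (A * B)"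
    using assms by (intro transpose_mult[symmetric]) auto
  finally show ?thesis using assms by simp
qed

lemma INV1: "v \<in> carrier_vec 18 \<Longrightarrow> lin_kernel Bm (lin_kernel G v) = v"
  by (rule INV_gen[OF G_carrier Bm_carrier GB])
lemma INV2: "v \<in> carrier_vec 18 \<Longrightarrow> lin_kernel G (lin_kernel Bm v) = v"
  by (rule INV_gen[OF Bm_carrier G_carrier BG])

lemma dim_LK: "dim_vec (lin_kernel G v) = 18"
  by (simp add: lin_kernel_def G_def)

lemma LK: "length xs = 18 \<Longrightarrow> k < 18 \<Longrightarrow>
   lin_kernel G (vec_of_list xs) $ k = (\<Sum>j<18. xs!j * of_bool (Rb!j!k))"
  by (simp add: lin_kernel_def G_def scalar_prod_def atLeast0LessThan vec_of_list_index mult.commute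
      del: mult_bit_eq_and add_bit_eq_xor)

lemma bit_neq: "((a::bit) \<noteq> b) = (a + b \<noteq> 0)"
  by (cases a; cases b) (auto simp del: add_bit_eq_xor)

lemma bit_neq2: "(a::bit) + b = c \<Longrightarrow> (a \<noteq> b) = (c \<noteq> 0)"
  by (cases a; cases b) (auto simp del: add_bit_eq_xor)

lemma map2_self: "map2 (+) w w = replicate (length w) (0::bit)"
  by (induction w) auto

lemma of_bool_eq1: "(of_bool (b = 1) :: bit) = b"
  by (cases b) auto

lemma HAM:
  assumes i: "i < 18" and lw: "length w = i" and lu: "length u = 17 - i" and lv: "length v = 17 - i"
  shows "hamming (lin_kernel G (vec_of_list (w@0#u))) (lin_kernel G (vec_of_list (w@1#v)))
       = wtb (lincomb (Rb!i) (drop (Suc i) Rb) (map (\<lambda>b. b = 1) (map2 (+) u v)))"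
proof -
  define x where "x = w@0#u"
  define y where "y = w@(1::bit)#v"
  define d where "d = map2 (+) u v"
  define L where "L = lincomb (Rb!i) (drop (Suc i) Rb) (map (\<lambda>b. b = 1) d)"
  have lx: "length x = 18" and ly: "length y = 18" using lw lu lv i by (auto simp: x_def y_def)
  have ld: "length d = 17 - i" using lu lv by (simp add: d_def)
  have c: "map2 (+) x y = replicate i 0 @ 1 # d"
    using lw lu lv by (simp add: x_def y_def d_def zip_append map2_self del: add_bit_eq_xor)
  have Ri: "length (Rb!i) = 18" using rows_ok i by auto
  have rs: "\<forall>r\<in>set (drop (Suc i) Rb). length r = length (Rb!i)"
    using rows_ok Ri by (auto dest: in_set_dropD)
  have ldr: "length (drop (Suc i) Rb) = 17 - i" using rows_ok by simp
  have lL: "length L = 18" unfolding L_def using len_lincomb[OF rs] Ri by simp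
  have key: "(lin_kernel G (vec_of_list x) $ k \<noteq> lin_kernel G (vec_of_list y) $ k) = L!k" if k: "k < 18" for k
  proof -
    have "lin_kernel G (vec_of_list x) $ k + lin_kernel G (vec_of_list y) $ k
       = (\<Sum>j<18. x!j * of_bool (Rb!j!k)) + (\<Sum>j<18. y!j * of_bool (Rb!j!k))"
      by (simp only: LK[OF lx k] LK[OF ly k])
    also have "\<dots> = (\<Sum>j<18. (x!j + y!j) * of_bool (Rb!j!k))"
      by (simp only: sum.distrib[symmetric] distrib_right)
    also have "\<dots> = (\<Sum>j<length (replicate i 0 @ 1 # d). (replicate i 0 @ 1 # d)!j * of_bool (Rb!j!k))"
    proof -
      have "length (replicate i 0 @ (1::bit) # d) = 18" using ld i by simp
      moreover have "x!j + y!j = (replicate i 0 @ 1 # d)!j" if "j < 18" for j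
        using that lx ly by (simp only: c[symmetric]) simp
      ultimately show ?thesis by (intro sum.cong) auto
    qed
    also have "\<dots> = of_bool (Rb!i!k) + (\<Sum>t<length d. d!t * of_bool (Rb!(Suc i + t)!k))"
      by (rule SPLIT)
    also have "\<dots> = of_bool (L!k)"
    proof -
      have "(of_bool (L!k) :: bit) = of_bool (Rb!i!k) + (\<Sum>t<length (drop (Suc i) Rb).
          of_bool (map (\<lambda>b. b = 1) d ! t) * of_bool (drop (Suc i) Rb ! t ! k))"
        unfolding L_def using LC[OF _ rs, of "map (\<lambda>b. b = 1) d" k] ld ldr Ri k
        by (simp del: mult_bit_eq_and add_bit_eq_xor)
      also have "\<dots> = of_bool (Rb!i!k) + (\<Sum>t<length d. d!t * of_bool (Rb!(Suc i + t)!k))"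
        using ld ldr rows_ok by (intro arg_cong2[where f="(+)"] sum.cong) (auto simp: of_bool_eq1 simp del: mult_bit_eq_and add_bit_eq_xor)
      finally show ?thesis by (rule sym)
    qed
    finally have e: "lin_kernel G (vec_of_list x) $ k + lin_kernel G (vec_of_list y) $ k = of_bool (L!k)" .
    show ?thesis using bit_neq2[OF e] by (cases "L!k") simp_all
  qed
  have "hamming (lin_kernel G (vec_of_list x)) (lin_kernel G (vec_of_list y)) = card {k. k < length L \<and> L!k}"
    unfolding hamming_def dim_LK lL using key by metis
  also have "\<dots> = wtb L" by (simp add: wtb_def length_filter_conv_card)
  finally show ?thesis by (simp add: x_def y_def L_def d_def)
qed


lemma dim_LKB: "dim_vec (lin_kernel Bm v) = 18"
  by (simp add: lin_kernel_def Bm_def)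

lemma ham_le: "hamming a b \<le> dim_vec a"
proof -
  have "hamming a b \<le> card {..<dim_vec a}" unfolding hamming_def by (rule card_mono) auto
  then show ?thesis by simp
qed

lemma ham_LK: "hamming (lin_kernel G x) y \<le> 18"
  using ham_le[of "lin_kernel G x" y] dim_LK by simp

lemma map_wit: "length cs = n \<Longrightarrow> map (\<lambda>b. b = 1) (map2 (+) (replicate n (0::bit)) (map of_bool cs)) = cs"
  by (induction cs arbitrary: n) (auto simp: Suc_length_conv simp del: add_bit_eq_xor)

lemma PD:
  assumes i: "i < 18"
    and lb: "\<And>cs. length cs = 17 - i \<Longrightarrow> D \<le> wtb (lincomb (Rb!i) (drop (Suc i) Rb) cs)"
    and w1: "length cs0 = 17 - i" and w2: "wtb (lincomb (Rb!i) (drop (Suc i) Rb) cs0) = D"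
  shows "partial_dist 18 (lin_kernel G) i = D"
  unfolding partial_dist_def
proof (rule Min_eqI)
  let ?S = "{hamming (lin_kernel G (vec_of_list (w @ 0 # u))) (lin_kernel G (vec_of_list (w @ 1 # v))) | w u v.
      length w = i \<and> length u = 18 - i - 1 \<and> length v = 18 - i - 1}"
  have "?S \<subseteq> {..18}" using ham_LK by auto
  then show "finite ?S" by (rule finite_subset) simp
  show "y \<ge> D" if "y \<in> ?S" for y
  proof -
    from that obtain w u v where y: "y = hamming (lin_kernel G (vec_of_list (w @ 0 # u))) (lin_kernel G (vec_of_list (w @ 1 # v)))"
      and l: "length w = i" "length u = 17 - i" "length v = 17 - i" by auto
    show ?thesis unfolding y HAM[OF i l] by (rule lb) (simp add: l)
  qed
  have "hamming (lin_kernel G (vec_of_list (replicate i 0 @ 0 # replicate (17 - i) 0)))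
      (lin_kernel G (vec_of_list (replicate i 0 @ 1 # map of_bool cs0))) = D"
    using HAM[of i "replicate i 0" "replicate (17 - i) 0" "map of_bool cs0"] i w1 w2 map_wit[OF w1] by simp
  then show "D \<in> ?S"
    apply -
    apply (rule CollectI)
    apply (rule exI[where x="replicate i 0"])
    apply (rule exI[where x="replicate (17 - i) 0"])
    apply (rule exI[where x="map of_bool cs0"])
    apply (intro conjI)
       apply (rule sym, assumption)
    using w1 by simp_all
qed

lemma NZ:
  assumes i: "i < 18" and lc: "length cs = 17 - i"
  shows "wtb (lincomb (Rb!i) (drop (Suc i) Rb) cs) \<noteq> 0"
proof
  assume z: "wtb (lincomb (Rb!i) (drop (Suc i) Rb) cs) = 0"
  define x where "x = replicate i (0::bit) @ 0 # replicate (17 - i) 0"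
  define y where "y = replicate i (0::bit) @ 1 # map of_bool cs"
  have lx: "length x = 18" and ly: "length y = 18" using i lc by (auto simp: x_def y_def)
  have "hamming (lin_kernel G (vec_of_list x)) (lin_kernel G (vec_of_list y)) = 0"
    using HAM[of i "replicate i 0" "replicate (17 - i) 0" "map of_bool cs"] i lc z map_wit[OF lc]
    by (simp add: x_def y_def)
  then have "{k. k < 18 \<and> lin_kernel G (vec_of_list x) $ k \<noteq> lin_kernel G (vec_of_list y) $ k} = {}"
    unfolding hamming_def dim_LK by (subst (asm) card_0_eq) auto
  then have "lin_kernel G (vec_of_list x) = lin_kernel G (vec_of_list y)"
    by (intro eq_vecI) (auto simp: dim_LK)
  moreover have e1: "lin_kernel Bm (lin_kernel G (vec_of_list x)) = vec_of_list x"
    by (rule INV1, rule carrier_vecI, simp add: lx)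
  moreover have e2: "lin_kernel Bm (lin_kernel G (vec_of_list y)) = vec_of_list y"
    by (rule INV1, rule carrier_vecI, simp add: ly)
  ultimately have "vec_of_list x = vec_of_list y" by metis
  then have "x = y" by (metis list_vec)
  then have "x ! i = y ! i" by simp
  then show False by (simp add: x_def y_def nth_append)
qed

lemma EVN:
  assumes i: "1 \<le> i" "i < 18" and ev: "\<forall>r\<in>set (drop 1 Rb). even (wtb r)"
  shows "even (wtb (lincomb (Rb!i) (drop (Suc i) Rb) cs))"
proof (rule EV)
  have e: "Rb ! i = drop 1 Rb ! (i - 1)" using i rows_ok by simp
  have "i - 1 < length (drop 1 Rb)" using i rows_ok by simp
  then have "Rb!i \<in> set (drop 1 Rb)" unfolding e by (rule nth_mem)
  then show "even (wtb (Rb!i))" using ev by blast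
  have "set (drop (Suc i) Rb) \<subseteq> set (drop 1 Rb)" by (rule set_drop_subset_set_drop) simp
  moreover have "length (Rb!i) = 18" using i rows_ok by auto
  ultimately show "\<forall>r\<in>set (drop (Suc i) Rb). even (wtb r) \<and> length r = length (Rb!i)"
    using ev rows_ok by (auto dest: in_set_dropD)
qed

lemma even2: "(n::nat) \<noteq> 0 \<Longrightarrow> even n \<Longrightarrow> 2 \<le> n" by presburger

lemma pd0: "partial_dist 18 (lin_kernel G) 0 = 1"
  apply (rule PD[of 0 1 "[False,False,False,False,False,False,False,False,False,False,False,False,False,False,False,False,False]"])
  subgoal by simp
  subgoal for cs using NZ[of 0 cs] by simp
  subgoal by simp
  subgoal by (rule wit0)
  done

lemma pd1: "partial_dist 18 (lin_kernel G) 1 = 2"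
  apply (rule PD[of 1 2 "[False,False,False,False,False,False,False,False,False,False,False,False,False,False,False,False]"])
  subgoal by simp
  subgoal for cs using NZ[of 1 cs] EVN[of 1 cs, OF _ _ even_rows] even2 by simp
  subgoal by simp
  subgoal by (rule wit1)
  done

lemma pd2: "partial_dist 18 (lin_kernel G) 2 = 2"
  apply (rule PD[of 2 2 "[False,False,False,False,False,False,False,False,False,False,False,False,False,False,False]"])
  subgoal by simp
  subgoal for cs using NZ[of 2 cs] EVN[of 2 cs, OF _ _ even_rows] even2 by simp
  subgoal by simp
  subgoal by (rule wit2)
  done

lemma pd3: "partial_dist 18 (lin_kernel G) 3 = 2"
  apply (rule PD[of 3 2 "[False,False,False,False,False,False,False,False,False,False,False,False,False,False]"])
  subgoal by simp
  subgoal for cs using NZ[of 3 cs] EVN[of 3 cs, OF _ _ even_rows] even2 by simp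
  subgoal by simp
  subgoal by (rule wit3)
  done

lemma pd4: "partial_dist 18 (lin_kernel G) 4 = 2"
  apply (rule PD[of 4 2 "[False,False,False,False,False,False,False,False,False,False,False,False,False]"])
  subgoal by simp
  subgoal for cs using NZ[of 4 cs] EVN[of 4 cs, OF _ _ even_rows] even2 by simp
  subgoal by simp
  subgoal by (rule wit4)
  done

lemma pd5: "partial_dist 18 (lin_kernel G) 5 = 2"
  apply (rule PD[of 5 2 "[False,False,False,False,False,False,False,False,False,False,False,False]"])
  subgoal by simp
  subgoal for cs using NZ[of 5 cs] EVN[of 5 cs, OF _ _ even_rows] even2 by simp
  subgoal by simp
  subgoal by (rule wit5)
  done

lemma pd6: "partial_dist 18 (lin_kernel G) 6 = 4"
  apply (rule PD[of 6 4 "[False,False,False,False,False,False,False,False,False,False,False]"])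
  subgoal by simp
  subgoal for cs using CM[of cs "drop (Suc 6) Rb" "Rb!6"] cmin6 rows_ok by simp
  subgoal by simp
  subgoal by (rule wit6)
  done

lemma pd7: "partial_dist 18 (lin_kernel G) 7 = 4"
  apply (rule PD[of 7 4 "[False,False,False,False,False,False,False,False,False,False]"])
  subgoal by simp
  subgoal for cs using CM[of cs "drop (Suc 7) Rb" "Rb!7"] cmin7 rows_ok by simp
  subgoal by simp
  subgoal by (rule wit7)
  done

lemma pd8: "partial_dist 18 (lin_kernel G) 8 = 4"
  apply (rule PD[of 8 4 "[False,False,False,False,False,False,False,False,False]"])
  subgoal by simp
  subgoal for cs using CM[of cs "drop (Suc 8) Rb" "Rb!8"] cmin8 rows_ok by simp
  subgoal by simp
  subgoal by (rule wit8)
  done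

lemma pd9: "partial_dist 18 (lin_kernel G) 9 = 4"
  apply (rule PD[of 9 4 "[False,False,False,False,False,False,False,False]"])
  subgoal by simp
  subgoal for cs using CM[of cs "drop (Suc 9) Rb" "Rb!9"] cmin9 rows_ok by simp
  subgoal by simp
  subgoal by (rule wit9)
  done

lemma pd10: "partial_dist 18 (lin_kernel G) 10 = 6"
  apply (rule PD[of 10 6 "[False,False,False,False,False,False,False]"])
  subgoal by simp
  subgoal for cs using CM[of cs "drop (Suc 10) Rb" "Rb!10"] cmin10 rows_ok by simp
  subgoal by simp
  subgoal by (rule wit10)
  done

lemma pd11: "partial_dist 18 (lin_kernel G) 11 = 6"
  apply (rule PD[of 11 6 "[False,False,False,False,False,False]"])
  subgoal by simp
  subgoal for cs using CM[of cs "drop (Suc 11) Rb" "Rb!11"] cmin11 rows_ok by simp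
  subgoal by simp
  subgoal by (rule wit11)
  done

lemma pd12: "partial_dist 18 (lin_kernel G) 12 = 8"
  apply (rule PD[of 12 8 "[False,False,False,False,False]"])
  subgoal by simp
  subgoal for cs using CM[of cs "drop (Suc 12) Rb" "Rb!12"] cmin12 rows_ok by simp
  subgoal by simp
  subgoal by (rule wit12)
  done

lemma pd13: "partial_dist 18 (lin_kernel G) 13 = 8"
  apply (rule PD[of 13 8 "[False,False,False,False]"])
  subgoal by simp
  subgoal for cs using CM[of cs "drop (Suc 13) Rb" "Rb!13"] cmin13 rows_ok by simp
  subgoal by simp
  subgoal by (rule wit13)
  done

lemma pd14: "partial_dist 18 (lin_kernel G) 14 = 8"
  apply (rule PD[of 14 8 "[False,False,False]"])
  subgoal by simp
  subgoal for cs using CM[of cs "drop (Suc 14) Rb" "Rb!14"] cmin14 rows_ok by simp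
  subgoal by simp
  subgoal by (rule wit14)
  done

lemma pd15: "partial_dist 18 (lin_kernel G) 15 = 8"
  apply (rule PD[of 15 8 "[False,False]"])
  subgoal by simp
  subgoal for cs using CM[of cs "drop (Suc 15) Rb" "Rb!15"] cmin15 rows_ok by simp
  subgoal by simp
  subgoal by (rule wit15)
  done

lemma pd16: "partial_dist 18 (lin_kernel G) 16 = 8"
  apply (rule PD[of 16 8 "[False]"])
  subgoal by simp
  subgoal for cs using CM[of cs "drop (Suc 16) Rb" "Rb!16"] cmin16 rows_ok by simp
  subgoal by simp
  subgoal by (rule wit16)
  done

lemma pd17: "partial_dist 18 (lin_kernel G) 17 = 16"
  apply (rule PD[of 17 16 "[]"])
  subgoal by simp
  subgoal for cs using CM[of cs "drop (Suc 17) Rb" "Rb!17"] cmin17 rows_ok by simp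
  subgoal by simp
  subgoal by (rule wit17)
  done

lemma p1: "(2::real)^569 < 3^359" by simp
lemma p2: "(3::real)^306 < 2^485" by simp
lemma s: "(\<Sum>i<18. log 18 (real ([1,2,2,2,2,2,4,4,4,4,6,6,8,8,8,8,8,16::nat] ! i)))
   = log 18 1 + 5 * log 18 2 + 4 * log 18 4 + 2 * log 18 6 + 5 * log 18 8 + log 18 16"
  by (simp add: numeral_eq_Suc)

lemma aux: "(x::real) \<noteq> 0 \<Longrightarrow> (1/18) * (0/x + 5*(a/x)+4*(2*a/x)+2*((a+b)/x)+5*(3*a/x)+4*a/x) = (34*a+2*b)/(18*x)"
  by (simp add: field_simps)

lemma fin: "(V::real) < 0.495215 \<Longrightarrow> 0.495205 < V \<Longrightarrow> \<bar>V - 0.49521\<bar> < (0.000005::real)"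
  unfolding abs_less_iff by (auto simp: field_simps)

lemma numeric: "\<bar>(1 / 18) * (\<Sum>i<18. log 18 (real ([1,2,2,2,2,2,4,4,4,4,6,6,8,8,8,8,8,16::nat] ! i))) - 0.49521\<bar>
           < (0.000005::real)"
proof -
  define a where "a = ln (2::real)"
  define b where "b = ln (3::real)"
  have a0: "a > 0" and b0: "b > 0" by (simp_all add: a_def b_def)
  have l4: "ln (4::real) = 2 * a" using ln_realpow[of 2 2] by (simp add: a_def)
  have l8: "ln (8::real) = 3 * a" using ln_realpow[of 2 3] by (simp add: a_def)
  have l16: "ln (16::real) = 4 * a" using ln_realpow[of 2 4] by (simp add: a_def)
  have l6: "ln (6::real) = a + b" using ln_mult[of 2 3] by (simp add: a_def b_def)
  have l18: "ln (18::real) = a + 2 * b" using ln_mult[of 2 9] ln_realpow[of 3 2] by (simp add: a_def b_def)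
  have e1: "ln ((2::real)^569) = 569 * a"
  proof -
    have "ln ((2::real)^569) = real 569 * ln 2" by (rule ln_realpow; simp)
    then show ?thesis by (simp only: of_nat_numeral a_def)
  qed
  have e2: "ln ((3::real)^359) = 359 * b"
  proof -
    have "ln ((3::real)^359) = real 359 * ln 3" by (rule ln_realpow; simp)
    then show ?thesis by (simp only: of_nat_numeral b_def)
  qed
  have e3: "ln ((3::real)^306) = 306 * b"
  proof -
    have "ln ((3::real)^306) = real 306 * ln 3" by (rule ln_realpow; simp)
    then show ?thesis by (simp only: of_nat_numeral b_def)
  qed
  have e4: "ln ((2::real)^485) = 485 * a"
  proof -
    have "ln ((2::real)^485) = real 485 * ln 2" by (rule ln_realpow; simp)
    then show ?thesis by (simp only: of_nat_numeral a_def)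
  qed
  have "ln ((2::real)^569) < ln (3^359)"
    by (rule ln_less_cancel_iff[THEN iffD2]) (simp_all only: p1, simp_all)
  then have i1: "569 * a < 359 * b" using e1 e2 by linarith
  have "ln ((3::real)^306) < ln (2^485)"
    by (rule ln_less_cancel_iff[THEN iffD2]) (simp_all only: p2, simp_all)
  then have i2: "306 * b < 485 * a" using e3 e4 by linarith
  have d0: "a + 2 * b > 0" using a0 b0 by simp
  have v: "(1 / 18) * (\<Sum>i<18. log 18 (real ([1,2,2,2,2,2,4,4,4,4,6,6,8,8,8,8,8,16::nat] ! i)))
      = (34 * a + 2 * b) / (18 * (a + 2 * b))"
  proof -
    have "(1 / 18) * (\<Sum>i<18. log 18 (real ([1,2,2,2,2,2,4,4,4,4,6,6,8,8,8,8,8,16::nat] ! i)))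
      = (1/18) * (ln 1 / ln 18 + 5 * (ln 2 / ln 18) + 4 * (ln 4 / ln 18) + 2 * (ln 6 / ln 18) + 5 * (ln 8 / ln 18) + ln 16 / ln 18)"
      unfolding s by (simp only: log_def)
    also have "\<dots> = (1/18) * (0 / (a + 2*b) + 5 * (a / (a + 2*b)) + 4 * (2*a / (a + 2*b)) + 2 * ((a+b) / (a + 2*b)) + 5 * (3*a / (a + 2*b)) + 4*a / (a + 2*b))"
      by (simp only: l4 l8 l16 l6 l18 ln_one a_def)
    also have "\<dots> = (34 * a + 2 * b) / (18 * (a + 2 * b))"
      by (rule aux) (use d0 in simp)
    finally show ?thesis .
  qed
  have u: "(34 * a + 2 * b) / (18 * (a + 2 * b)) < 0.495215"
    using d0 i1 by (simp add: pos_divide_less_eq)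
  have l: "0.495205 < (34 * a + 2 * b) / (18 * (a + 2 * b))"
    using d0 i2 by (simp add: pos_less_divide_eq)
  show ?thesis unfolding v using fin[OF u l] .
qed

lemma G_inv: "invertible_mat G"
  unfolding invertible_mat_def inverts_mat_def using GB BG G_carrier Bm_carrier
  by (auto intro!: exI[of _ Bm])

lemma G_kernel: "is_kernel 18 (lin_kernel G)"
  unfolding is_kernel_def
proof (rule bij_betw_byWitness[where f'="lin_kernel Bm"])
  show "\<forall>a\<in>carrier_vec 18. lin_kernel Bm (lin_kernel G a) = a" using INV1 by blast
  show "\<forall>a\<in>carrier_vec 18. lin_kernel G (lin_kernel Bm a) = a" using INV2 by blast
  show "lin_kernel G ` carrier_vec 18 \<subseteq> carrier_vec 18"
    by (rule image_subsetI, rule carrier_vecI, rule dim_LK)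
  show "lin_kernel Bm ` carrier_vec 18 \<subseteq> carrier_vec 18"
    by (rule image_subsetI, rule carrier_vecI, rule dim_LKB)
qed

lemma pd_map: "map (partial_dist 18 (lin_kernel G)) [0..<18] = [1,2,2,2,2,2,4,4,4,4,6,6,8,8,8,8,8,16::nat]"
proof -
  have "[0..<18] = [0,1,2,3,4,5,6,7,8,9,10,11,12,13,14,15,16,17::nat]" by code_simp
  then show ?thesis by (simp only: list.map pd0 pd1 pd2 pd3 pd4 pd5 pd6 pd7 pd8 pd9 pd10 pd11 pd12 pd13 pd14 pd15 pd16 pd17)
qed

lemma UNIV_bit: "(UNIV :: bit set) = {0, 1}"
  by (auto intro: bit.exhaust)

lemma fin_carrier: "finite (carrier_vec n :: bit vec set)"
proof -
  have "carrier_vec n \<subseteq> vec_of_list ` {xs. set xs \<subseteq> (UNIV :: bit set) \<and> length xs = n}"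
  proof
    fix v :: "bit vec" assume "v \<in> carrier_vec n"
    then have "length (list_of_vec v) = n" by simp
    then show "v \<in> vec_of_list ` {xs. set xs \<subseteq> UNIV \<and> length xs = n}"
      by (intro image_eqI[of _ _ "list_of_vec v"]) (auto simp: vec_list)
  qed
  moreover have "finite {xs. set xs \<subseteq> (UNIV :: bit set) \<and> length xs = n}"
    by (rule finite_lists_length_eq) (simp add: UNIV_bit)
  ultimately show ?thesis by (metis finite_surj)
qed

lemma set_cong3: "(\<And>w u v. P w u v \<Longrightarrow> f w u v = f' w u v) \<Longrightarrow>
  {f w u v | w u v. P w u v} = {f' w u v | w u v. P w u v}"
  by (intro Collect_cong) metis

lemma pd_restrict: assumes i: "i < 18"
  shows "partial_dist 18 g i = partial_dist 18 (restrict g (carrier_vec 18)) i"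
  unfolding partial_dist_def
proof (rule arg_cong[where f=Min], rule set_cong3)
  fix w u v :: "bit list"
  assume l: "length w = i \<and> length u = 18 - i - 1 \<and> length v = 18 - i - 1"
  have "vec_of_list (w @ 0 # u) \<in> carrier_vec 18" "vec_of_list (w @ 1 # v) \<in> carrier_vec 18"
    using l i by (auto intro!: carrier_vecI)
  then show "hamming (g (vec_of_list (w @ 0 # u))) (g (vec_of_list (w @ 1 # v))) =
    hamming (restrict g (carrier_vec 18) (vec_of_list (w @ 0 # u))) (restrict g (carrier_vec 18) (vec_of_list (w @ 1 # v)))"
    by (simp only: restrict_apply') 
qed

lemma ke_restrict: "kernel_exponent 18 g = kernel_exponent 18 (restrict g (carrier_vec 18))"
  unfolding kernel_exponent_def
proof (intro arg_cong2[where f="(*)"] refl sum.cong)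
  fix i assume "i \<in> {..<18::nat}"
  then have "partial_dist 18 g i = partial_dist 18 (restrict g (carrier_vec 18)) i"
    by (intro pd_restrict) simp
  then show "log (real 18) (real (partial_dist 18 g i)) = log (real 18) (real (partial_dist 18 (restrict g (carrier_vec 18)) i))"
    by (simp only:)
qed

lemma finK: "finite {kernel_exponent 18 g | g. is_kernel 18 g}"
proof (rule finite_subset)
  show "{kernel_exponent 18 g | g. is_kernel 18 g} \<subseteq>
      kernel_exponent 18 ` (\<Pi>\<^sub>E x \<in> carrier_vec 18. carrier_vec 18)"
  proof
    fix e assume "e \<in> {kernel_exponent 18 g | g. is_kernel 18 g}"
    then obtain g where e: "e = kernel_exponent 18 g" and g: "is_kernel 18 g" by auto
    have "restrict g (carrier_vec 18) \<in> (\<Pi>\<^sub>E x \<in> carrier_vec 18. carrier_vec 18)"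
      using g unfolding is_kernel_def restrict_PiE_iff by (auto dest: bij_betwE)
    then show "e \<in> kernel_exponent 18 ` (\<Pi>\<^sub>E x \<in> carrier_vec 18. carrier_vec 18)"
      unfolding e by (subst ke_restrict) (rule imageI)
  qed
  show "finite (kernel_exponent 18 ` (\<Pi>\<^sub>E x \<in> carrier_vec 18. carrier_vec 18))"
    by (intro finite_imageI finite_PiE fin_carrier)
qed

lemma pdi: "i < 18 \<Longrightarrow> partial_dist 18 (lin_kernel G) i = [1,2,2,2,2,2,4,4,4,4,6,6,8,8,8,8,8,16::nat] ! i"
proof -
  assume i: "i < 18"
  have "map (partial_dist 18 (lin_kernel G)) [0..<18] ! i = partial_dist 18 (lin_kernel G) i"
    using i by (simp only: nth_map_upt diff_zero add_0)
  then show ?thesis by (simp only: pd_map)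
qed

lemma ke: "kernel_exponent 18 (lin_kernel G) = (1 / 18) * (\<Sum>i<18. log 18 (real ([1,2,2,2,2,2,4,4,4,4,6,6,8,8,8,8,8,16::nat] ! i)))"
  unfolding kernel_exponent_def of_nat_numeral
  apply (intro arg_cong2[where f="(*)"] refl sum.cong)
  apply (simp only: lessThan_iff pdi)
  done

lemma le: "kernel_exponent 18 (lin_kernel G) \<le> opt_exponent 18"
  unfolding opt_exponent_def
  apply (rule Max_ge[OF finK])
  apply (rule CollectI)
  apply (rule exI[of _ "lin_kernel G"])
  apply (rule conjI[OF refl G_kernel])
  done

lemma exG: "\<exists>G \<in> carrier_mat 18 18. invertible_mat G \<and>
            map (partial_dist 18 (lin_kernel G)) [0..<18]
              = [1,2,2,2,2,2,4,4,4,4,6,6,8,8,8,8,8,16]"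
  by (rule bexI[of _ G], rule conjI[OF G_inv pd_map], rule G_carrier)

lemma le2: "opt_exponent 18 \<ge> (1 / 18) * (\<Sum>i<18. log 18 (real ([1,2,2,2,2,2,4,4,4,4,6,6,8,8,8,8,8,16::nat] ! i)))"
  using le unfolding ke .

theorem mainTheorem18:
  shows "(\<exists>G \<in> carrier_mat 18 18. invertible_mat G \<and>
            map (partial_dist 18 (lin_kernel G)) [0..<18]
              = [1,2,2,2,2,2,4,4,4,4,6,6,8,8,8,8,8,16])
       \<and> opt_exponent 18 \<ge>
           (1 / 18) * (\<Sum>i<18. log 18 (real ([1,2,2,2,2,2,4,4,4,4,6,6,8,8,8,8,8,16::nat] ! i)))
       \<and> \<bar>(1 / 18) * (\<Sum>i<18. log 18 (real ([1,2,2,2,2,2,4,4,4,4,6,6,8,8,8,8,8,16::nat] ! i))) - 0.49521\<bar>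
           < (0.000005::real)"
  by (intro conjI exG le2 numeric)

end
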